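(* Let $\mathfrak{N}_1$ and $\mathfrak{N}_2$ be von Neumann algebras on a Hilbert space $\mathcal{H}$ such that $\mathfrak{N}_1 \subseteq \mathfrak{N}_2'$, and let $\omega$ be a normal state of $\mathfrak{N}_1 \vee \mathfrak{N}_2$. If $\omega$ is an EPR state for incommensurable pairs, then $\omega$ is Bell correlated.
   Context: $\mathfrak{N}'$ denotes the commutant, $\mathfrak{N}_1 \vee \mathfrak{N}_2$ the von Neumann algebra generated by $\mathfrak{N}_1$ and $\mathfrak{N}_2$, $[X,Y] = XY - YX$, $|X|^2 = X^*X$. A self-adjoint contraction is a self-adjoint $X$ with $-I \le X \le I$. For commuting self-adjoint operators $A_1, A_2$, a normal state $\omega$ is an EPR state for $(A_1, A_2)$ if $\omega((A_1 - A_2)^2) = 0$. A normal state $\omega$ of $\mathfrak{N}_1 \vee \mathfrak{N}_2$ is an EPR state for incommensurable pairs if there exist projections $E_1, F_1 \in \mathfrak{N}_1$ and $E_2, F_2 \in \mathfrak{N}_2$ such that $\omega$ is an EPR state for $(E_1,E_2)$ and for $(F_1,F_2)$, $\omega(|[E_1,F_1]|^2) \neq 0$, and $\omega(|[E_2,F_2]|^2) \neq 0$. The state $\omega$ is Bell correlated (violates a Bell inequality) if there exist self-adjoint contractions $A_1, B_1 \in \mathfrak{N}_1$ and $A_2, B_2 \in \mathfrak{N}_2$ such that $\frac{1}{2}\,|\omega(A_1A_2 + A_1B_2 + B_1A_2 - B_1B_2)| > 1$. *)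

theory Defs
  imports Complex_Main
begin

class complex_vector_space = ab_group_add +
  fixes scaleC :: "complex \<Rightarrow> 'a \<Rightarrow> 'a"
  assumes scaleC_add_right: "scaleC a (x + y) = scaleC a x + scaleC a y"
    and scaleC_add_left: "scaleC (a + b) x = scaleC a x + scaleC b x"
    and scaleC_scaleC: "scaleC a (scaleC b x) = scaleC (a * b) x"
    and scaleC_one: "scaleC 1 x = x"

class complex_inner_space = complex_vector_space +
  fixes cinner :: "'a \<Rightarrow> 'a \<Rightarrow> complex"
  assumes cinner_add_right: "cinner x (y + z) = cinner x y + cinner x z"
    and cinner_scaleC_right: "cinner x (scaleC a y) = a * cinner x y"
    and cinner_commute: "cinner y x = cnj (cinner x y)"
    and cinner_self_nonneg: "Im (cinner x x) = 0 \<and> 0 \<le> Re (cinner x x)"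
    and cinner_self_eq_zero: "cinner x x = 0 \<Longrightarrow> x = 0"

definition cnorm :: "'a::complex_inner_space \<Rightarrow> real" where
  "cnorm x = sqrt (Re (cinner x x))"

class chilbert_space = complex_inner_space +
  assumes cauchy_complete:
    "\<forall>e>0. \<exists>N::nat. \<forall>m\<ge>N. \<forall>n\<ge>N. sqrt (Re (cinner ((X::nat \<Rightarrow> 'a) m - X n) (X m - X n))) < e
     \<Longrightarrow> \<exists>L. \<forall>e>0. \<exists>N::nat. \<forall>n\<ge>N. sqrt (Re (cinner (X n - L) (X n - L))) < e"

type_synonym 'h op = "'h \<Rightarrow> 'h"

definition bounded_op :: "'h::chilbert_space op \<Rightarrow> bool" where
  "bounded_op A \<longleftrightarrow> (\<forall>x y. A (x + y) = A x + A y) \<and> (\<forall>c x. A (scaleC c x) = scaleC c (A x))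
     \<and> (\<exists>K. \<forall>x. cnorm (A x) \<le> K * cnorm x)"

definition adj :: "'h::chilbert_space op \<Rightarrow> 'h op" where
  "adj A = (THE B. \<forall>x y. cinner (A x) y = cinner x (B y))"

definition op_plus :: "'h::chilbert_space op \<Rightarrow> 'h op \<Rightarrow> 'h op" where
  "op_plus A B = (\<lambda>x. A x + B x)"

definition op_minus :: "'h::chilbert_space op \<Rightarrow> 'h op \<Rightarrow> 'h op" where
  "op_minus A B = (\<lambda>x. A x - B x)"

definition op_scale :: "complex \<Rightarrow> 'h::chilbert_space op \<Rightarrow> 'h op" where
  "op_scale c A = (\<lambda>x. scaleC c (A x))"

definition op_zero :: "'h::chilbert_space op" where
  "op_zero = (\<lambda>x. 0)"

definition commutator :: "'h::chilbert_space op \<Rightarrow> 'h op \<Rightarrow> 'h op" where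
  "commutator X Y = op_minus (X \<circ> Y) (Y \<circ> X)"

definition abs_sq :: "'h::chilbert_space op \<Rightarrow> 'h op" where
  "abs_sq X = adj X \<circ> X"

definition op_le :: "'h::chilbert_space op \<Rightarrow> 'h op \<Rightarrow> bool" where
  "op_le A B \<longleftrightarrow> (\<forall>x. Im (cinner x (B x - A x)) = 0 \<and> 0 \<le> Re (cinner x (B x - A x)))"

definition self_adjoint :: "'h::chilbert_space op \<Rightarrow> bool" where
  "self_adjoint A \<longleftrightarrow> bounded_op A \<and> adj A = A"

definition projection :: "'h::chilbert_space op \<Rightarrow> bool" where
  "projection E \<longleftrightarrow> self_adjoint E \<and> E \<circ> E = E"

definition sa_contraction :: "'h::chilbert_space op \<Rightarrow> bool" where
  "sa_contraction X \<longleftrightarrow> self_adjoint X \<and> op_le (op_scale (-1) id) X \<and> op_le X id"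

definition commutant :: "'h::chilbert_space op set \<Rightarrow> 'h op set" where
  "commutant S = {B. bounded_op B \<and> (\<forall>A\<in>S. A \<circ> B = B \<circ> A)}"

text \<open>A von Neumann algebra: a self-adjoint set of bounded operators equal to its
  double commutant (equivalently, by the bicommutant theorem, a unital *-algebra closed
  in the weak operator topology).\<close>
definition von_neumann_algebra :: "'h::chilbert_space op set \<Rightarrow> bool" where
  "von_neumann_algebra M \<longleftrightarrow> M \<subseteq> {A. bounded_op A} \<and> (\<forall>A\<in>M. adj A \<in> M)
     \<and> commutant (commutant M) = M"

definition vN_join :: "'h::chilbert_space op set \<Rightarrow> 'h op set \<Rightarrow> 'h op set" where
  "vN_join N1 N2 = commutant (commutant (N1 \<union> N2))"

definition is_state :: "'h::chilbert_space op set \<Rightarrow> ('h op \<Rightarrow> complex) \<Rightarrow> bool" where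
  "is_state M \<omega> \<longleftrightarrow>
     (\<forall>A\<in>M. \<forall>B\<in>M. \<omega> (op_plus A B) = \<omega> A + \<omega> B)
   \<and> (\<forall>c. \<forall>A\<in>M. \<omega> (op_scale c A) = c * \<omega> A)
   \<and> (\<forall>A\<in>M. Im (\<omega> (adj A \<circ> A)) = 0 \<and> 0 \<le> Re (\<omega> (adj A \<circ> A)))
   \<and> \<omega> id = 1"

definition op_directed :: "'h::chilbert_space op set \<Rightarrow> bool" where
  "op_directed D \<longleftrightarrow> (\<forall>A\<in>D. \<forall>B\<in>D. \<exists>C\<in>D. op_le A C \<and> op_le B C)"

definition is_op_lub :: "'h::chilbert_space op set \<Rightarrow> 'h op \<Rightarrow> bool" where
  "is_op_lub D A \<longleftrightarrow> self_adjoint A \<and> (\<forall>B\<in>D. op_le B A)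
     \<and> (\<forall>C. self_adjoint C \<and> (\<forall>B\<in>D. op_le B C) \<longrightarrow> op_le A C)"

definition normal_functional :: "'h::chilbert_space op set \<Rightarrow> ('h op \<Rightarrow> complex) \<Rightarrow> bool" where
  "normal_functional M \<omega> \<longleftrightarrow>
     (\<forall>D A. D \<noteq> {} \<and> D \<subseteq> M \<and> op_directed D \<and> (\<forall>B\<in>D. op_le op_zero B) \<and> is_op_lub D A
        \<longrightarrow> \<omega> A = complex_of_real (SUP B\<in>D. Re (\<omega> B)))"

definition normal_state :: "'h::chilbert_space op set \<Rightarrow> ('h op \<Rightarrow> complex) \<Rightarrow> bool" where
  "normal_state M \<omega> \<longleftrightarrow> is_state M \<omega> \<and> normal_functional M \<omega>"

definition EPR_state_for :: "('h::chilbert_space op \<Rightarrow> complex) \<Rightarrow> 'h op \<Rightarrow> 'h op \<Rightarrow> bool" where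
  "EPR_state_for \<omega> A1 A2 \<longleftrightarrow> \<omega> (op_minus A1 A2 \<circ> op_minus A1 A2) = 0"

definition EPR_incommensurable ::
  "'h::chilbert_space op set \<Rightarrow> 'h op set \<Rightarrow> ('h op \<Rightarrow> complex) \<Rightarrow> bool" where
  "EPR_incommensurable N1 N2 \<omega> \<longleftrightarrow>
     (\<exists>E1\<in>N1. \<exists>F1\<in>N1. \<exists>E2\<in>N2. \<exists>F2\<in>N2.
        projection E1 \<and> projection F1 \<and> projection E2 \<and> projection F2
      \<and> EPR_state_for \<omega> E1 E2 \<and> EPR_state_for \<omega> F1 F2
      \<and> \<omega> (abs_sq (commutator E1 F1)) \<noteq> 0
      \<and> \<omega> (abs_sq (commutator E2 F2)) \<noteq> 0)"

definition Bell_correlated ::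
  "'h::chilbert_space op set \<Rightarrow> 'h op set \<Rightarrow> ('h op \<Rightarrow> complex) \<Rightarrow> bool" where
  "Bell_correlated N1 N2 \<omega> \<longleftrightarrow>
     (\<exists>A1\<in>N1. \<exists>B1\<in>N1. \<exists>A2\<in>N2. \<exists>B2\<in>N2.
        sa_contraction A1 \<and> sa_contraction B1 \<and> sa_contraction A2 \<and> sa_contraction B2
      \<and> cmod (\<omega> (op_minus (op_plus (op_plus (A1 \<circ> A2) (A1 \<circ> B2)) (B1 \<circ> A2)) (B1 \<circ> B2))) / 2 > 1)"

end

theory Submission
  imports Defs
begin


lemma scaleC_zero_left[simp]: "scaleC 0 (x::'a::complex_vector_space) = 0"
proof -
  have "scaleC (0+0) x = scaleC 0 x + scaleC 0 x" by (rule scaleC_add_left)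
  thus ?thesis by simp
qed
lemma scaleC_zero_right[simp]: "scaleC a (0::'a::complex_vector_space) = 0"
proof -
  have "scaleC a (0+0::'a) = scaleC a 0 + scaleC a 0" by (rule scaleC_add_right)
  thus ?thesis by simp
qed
lemma scaleC_minus_right: "scaleC a (- x) = - scaleC a (x::'a::complex_vector_space)"
proof -
  have "scaleC a (x + - x) = scaleC a x + scaleC a (-x)" by (rule scaleC_add_right)
  thus ?thesis by (simp add: eq_neg_iff_add_eq_0 add.commute)
qed
lemma scaleC_diff_right: "scaleC a (x - y) = scaleC a x - scaleC a (y::'a::complex_vector_space)"
  using scaleC_add_right[of a x "-y"] by (simp add: scaleC_minus_right)
lemma scaleC_minus_left: "scaleC (- a) x = - scaleC a (x::'a::complex_vector_space)"
proof -
  have "scaleC (a + - a) x = scaleC a x + scaleC (-a) x" by (rule scaleC_add_left)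
  thus ?thesis by (simp add: eq_neg_iff_add_eq_0 add.commute)
qed
lemma scaleC_diff_left: "scaleC (a - b) x = scaleC a x - scaleC b (x::'a::complex_vector_space)"
  using scaleC_add_left[of a "-b" x] by (simp add: scaleC_minus_left)
lemma scaleC_minus1: "scaleC (-1) x = - (x::'a::complex_vector_space)"
  by (simp add: scaleC_minus_left scaleC_one)

lemma cinner_zero_right[simp]: "cinner (x::'a::complex_inner_space) 0 = 0"
  using cinner_add_right[of x 0 0] by simp
lemma cinner_zero_left[simp]: "cinner 0 (x::'a::complex_inner_space) = 0"
  by (subst cinner_commute) simp
lemma cinner_minus_right: "cinner x (- y) = - cinner x (y::'a::complex_inner_space)"
proof -
  have "cinner x y + cinner x (- y) = 0" using cinner_add_right[of x y "-y"] by simp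
  thus ?thesis by (simp add: eq_neg_iff_add_eq_0 add.commute)
qed
lemma cinner_diff_right: "cinner x (y - z) = cinner x y - cinner x (z::'a::complex_inner_space)"
  using cinner_add_right[of x y "-z"] by (simp add: cinner_minus_right)
lemma cinner_add_left: "cinner (x + y) z = cinner x z + cinner y (z::'a::complex_inner_space)"
  by (subst (1 2 3) cinner_commute) (simp add: cinner_add_right)
lemma cinner_scaleC_left: "cinner (scaleC a x) y = cnj a * cinner x (y::'a::complex_inner_space)"
  by (subst (1 2) cinner_commute) (simp add: cinner_scaleC_right)
lemma cinner_minus_left: "cinner (- x) y = - cinner x (y::'a::complex_inner_space)"
  by (subst (1 2) cinner_commute) (simp add: cinner_minus_right)
lemma cinner_diff_left: "cinner (x - y) z = cinner x z - cinner y (z::'a::complex_inner_space)"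
  by (subst (1 2 3) cinner_commute) (simp add: cinner_diff_right)
lemma cinner_self_real: "cinner x x = complex_of_real (Re (cinner x (x::'a::complex_inner_space)))"
  using cinner_self_nonneg[of x] by (simp add: complex_eq_iff)
lemma cinner_self_Re_ge0: "0 \<le> Re (cinner x (x::'a::complex_inner_space))"
  using cinner_self_nonneg[of x] by auto
lemma cinner_self_Im: "Im (cinner x (x::'a::complex_inner_space)) = 0"
  using cinner_self_nonneg[of x] by auto
lemma cinner_eq_zero_iff: "cinner x x = 0 \<longleftrightarrow> (x::'a::complex_inner_space) = 0"
  using cinner_self_eq_zero by auto
lemma cinner_ext: "(\<And>x. cinner x a = cinner x b) \<Longrightarrow> a = (b::'a::complex_inner_space)"
  by (metis cinner_diff_right cinner_eq_zero_iff right_minus_eq)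

lemma cnorm_ge0: "0 \<le> cnorm x" using cinner_self_Re_ge0[of x] by (simp add: cnorm_def)
lemma cnorm_sq: "(cnorm x)^2 = Re (cinner x x)"
  using cinner_self_Re_ge0[of x] by (simp add: cnorm_def)
lemma cnorm_zero_iff: "cnorm x = 0 \<longleftrightarrow> x = 0"
  by (metis cnorm_def cinner_self_real cinner_eq_zero_iff of_real_0 real_sqrt_eq_zero_cancel_iff Re_complex_of_real cinner_zero_left zero_complex.simps(1))

lemma cinner_cnorm: "cinner x x = complex_of_real ((cnorm x)^2)"
  using cinner_self_real cnorm_sq by metis

lemma cnorm_scaleC: "cnorm (scaleC c x) = cmod c * cnorm x"
proof -
  have "cinner (scaleC c x) (scaleC c x) = (cnj c * c) * cinner x x"
    by (simp add: cinner_scaleC_left cinner_scaleC_right)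
  also have "cnj c * c = complex_of_real ((cmod c)^2)" using complex_norm_square[of c]
    by (simp add: mult.commute)
  finally have "Re (cinner (scaleC c x) (scaleC c x)) = (cmod c)^2 * Re (cinner x x)"
    by simp
  thus ?thesis by (simp add: cnorm_def real_sqrt_mult)
qed

lemma CS_sq: "(cmod (cinner x y))^2 \<le> Re (cinner x x) * Re (cinner y y)"
proof (cases "x = 0")
  case True thus ?thesis by simp
next
  case False
  define a where "a = cinner x x"
  define b where "b = cinner x y"
  have ar: "a = complex_of_real (Re a)" unfolding a_def by (rule cinner_self_real)
  have apos: "Re a > 0" using False cinner_self_Re_ge0[of x] ar unfolding a_def
    by (metis cinner_eq_zero_iff less_eq_real_def of_real_0)
  define r where "r = Re a"
  have ar': "a = complex_of_real r" unfolding r_def by (rule ar)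
  have rpos: "r > 0" using apos r_def by simp
  define t where "t = b / complex_of_real r"
  define z where "z = y - scaleC t x"
  have e1: "cinner y x = cnj b" unfolding b_def by (rule cinner_commute)
  have "cinner z z = cinner y y - cinner y (scaleC t x) - (cinner (scaleC t x) y - cinner (scaleC t x) (scaleC t x))"
    unfolding z_def by (simp add: cinner_diff_left cinner_diff_right)
  also have "\<dots> = cinner y y - t * cnj b - cnj t * b + cnj t * t * a"
    unfolding cinner_scaleC_left cinner_scaleC_right e1 a_def b_def by (simp add: algebra_simps)
  also have "\<dots> = cinner y y - b * cnj b / a"
    unfolding t_def ar' using rpos by (simp add: field_simps)
  finally have "0 \<le> Re (cinner y y - b * cnj b / a)"
    using cinner_self_Re_ge0[of z] by simp
  moreover have "b * cnj b / a = complex_of_real ((cmod b)^2 / r)"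
    using complex_norm_square[of b] ar' by simp
  ultimately have "0 \<le> Re (cinner y y) - (cmod b)^2 / r"
    by simp
  hence "(cmod b)^2 / r \<le> Re (cinner y y)" by simp
  hence "(cmod b)^2 \<le> Re (cinner y y) * r" using rpos by (simp add: pos_divide_le_eq)
  thus ?thesis unfolding r_def a_def b_def by (metis mult.commute)
qed

lemma CS: "cmod (cinner x y) \<le> cnorm x * cnorm y"
proof -
  have "(cmod (cinner x y))^2 \<le> (cnorm x * cnorm y)^2"
    using CS_sq[of x y] by (simp add: power_mult_distrib cnorm_sq)
  thus ?thesis by (rule power2_le_imp_le) (use cnorm_ge0[of x] cnorm_ge0[of y] in auto)
qed

lemma cnorm_triangle: "cnorm (x + y) \<le> cnorm x + cnorm y"
proof -
  have "Re (cinner (x+y) (x+y)) = Re (cinner x x) + Re (cinner y y) + 2 * Re (cinner x y)"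
    by (simp add: cinner_add_left cinner_add_right cinner_commute[of y x])
  also have "\<dots> \<le> (cnorm x)^2 + (cnorm y)^2 + 2 * (cnorm x * cnorm y)"
    using CS[of x y] complex_Re_le_cmod[of "cinner x y"] by (simp add: cnorm_sq)
  also have "\<dots> = (cnorm x + cnorm y)^2" by (simp add: power2_eq_square algebra_simps)
  finally have "(cnorm (x+y))^2 \<le> (cnorm x + cnorm y)^2" by (simp add: cnorm_sq)
  thus ?thesis by (rule power2_le_imp_le) (use cnorm_ge0[of x] cnorm_ge0[of y] in auto)
qed

lemma cnorm_minus: "cnorm (- x) = cnorm x"
  by (simp add: cnorm_def cinner_minus_left cinner_minus_right)

lemma cnorm_diff: "cnorm (x - y) \<le> cnorm x + cnorm y"
  using cnorm_triangle[of x "-y"] by (simp add: cnorm_minus)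

lemma cnorm_commute: "cnorm (x - y) = cnorm (y - x)"
  by (metis cnorm_minus minus_diff_eq)



lemma parallelogram:
  "Re (cinner (u - v) (u - v)) + Re (cinner (u + v) (u + v)) = 2 * Re (cinner u u) + 2 * Re (cinner (v::'a::complex_inner_space) v)"
  by (simp add: cinner_add_left cinner_add_right cinner_diff_left cinner_diff_right)

lemma cinner_scale2: "Re (cinner (scaleC 2 w) (scaleC 2 w)) = 4 * Re (cinner w (w::'a::complex_inner_space))"
  by (simp add: cinner_scaleC_left cinner_scaleC_right)

lemma linear_g:
  assumes add: "\<forall>x y. g (x+y) = g x + g y" and hom: "\<forall>c x. g (scaleC c x) = c * g (x::'a::complex_vector_space)"
  shows "g 0 = 0" "g (x - y) = g x - g y" "g (- x) = - g x"
proof -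
  have "g (scaleC 0 (0::'a)) = 0 * g 0" using hom by blast
  thus g0: "g 0 = 0" by simp
  have "g (scaleC (-1) x) = (-1) * g x" using hom by blast
  thus gm: "g (- x) = - g x" by (simp add: scaleC_minus1)
  have "g (scaleC (-1) y) = (-1) * g y" using hom by blast
  hence gy: "g (- y) = - g y" by (simp add: scaleC_minus1)
  have "g (x + - y) = g x + g (-y)" using add by blast
  thus "g (x - y) = g x - g y" using gy by simp
qed

lemma eps_le: "(\<And>e. e > 0 \<Longrightarrow> (a::real) < b + e) \<Longrightarrow> a \<le> b"
  by (rule field_le_epsilon) (auto intro: less_imp_le)

lemma riesz:
  fixes g :: "'a::chilbert_space \<Rightarrow> complex"
  assumes add: "\<forall>x y. g (x+y) = g x + g y" and hom: "\<forall>c x. g (scaleC c x) = c * g x"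
    and bnd: "\<forall>x. cmod (g x) \<le> K * cnorm x"
  shows "\<exists>z. \<forall>x. g x = cinner z x"
proof (cases "\<forall>x. g x = 0")
  case True thus ?thesis by (intro exI[of _ 0]) simp
next
  case False
  then obtain x0 where gx0: "g x0 \<noteq> 0" by blast
  note lin = linear_g[OF add hom]
  have Kpos: "K \<ge> 0"
  proof (rule ccontr)
    assume "\<not> K \<ge> 0"
    hence "K * cnorm x0 \<le> 0" using cnorm_ge0[of x0] by (simp add: mult_nonpos_nonneg)
    thus False using bnd gx0 by (metis norm_le_zero_iff order_trans)
  qed
  define Ks where "Ks = {k. g k = 0}"
  define h where "h k = Re (cinner (x0 - k) (x0 - k))" for k
  have h0: "h k \<ge> 0" for k unfolding h_def by (rule cinner_self_Re_ge0)
  define d2 where "d2 = Inf (h ` Ks)"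
  have Ks0: "0 \<in> Ks" unfolding Ks_def using lin by simp
  have bdd: "bdd_below (h ` Ks)" using h0 by (intro bdd_belowI[of _ 0]) auto
  have d2le: "d2 \<le> h k" if "k \<in> Ks" for k
    unfolding d2_def using bdd that by (simp add: cInf_lower)
  have d2nn: "d2 \<ge> 0" unfolding d2_def using Ks0 h0 by (intro cInf_greatest) auto
  have "\<exists>k\<in>Ks. h k < d2 + 1 / (real n + 1)" for n
  proof -
    have "Inf (h ` Ks) < d2 + 1 / (real n + 1)" unfolding d2_def by simp
    then obtain v where "v \<in> h ` Ks" "v < d2 + 1 / (real n + 1)"
      using cInf_lessD[of "h ` Ks"] Ks0 by blast
    thus ?thesis by auto
  qed
  then obtain ks where ksK: "\<And>n. ks n \<in> Ks" and ksh: "\<And>n. h (ks n) < d2 + 1 / (real n + 1)"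
    by metis
  have half_mem: "scaleC (1/2) (k + l) \<in> Ks" if "k \<in> Ks" "l \<in> Ks" for k l
    using that hom add unfolding Ks_def by simp
  have two_x: "scaleC 2 x = x + x" for x :: 'a
    using scaleC_add_left[of 1 1 x] by (simp add: scaleC_one)
  have pk: "Re (cinner (k - l) (k - l)) \<le> 2 * h k + 2 * h l - 4 * d2" if "k \<in> Ks" "l \<in> Ks" for k l
  proof -
    define m where "m = scaleC (1/2) (k + l)"
    have "scaleC 2 m = k + l" unfolding m_def by (simp add: scaleC_scaleC scaleC_one)
    hence "(x0 - k) + (x0 - l) = scaleC 2 (x0 - m)" by (simp add: scaleC_diff_right two_x algebra_simps)
    moreover have "(x0 - k) - (x0 - l) = l - k" by simp
    moreover have "Re (cinner (l - k) (l - k)) = Re (cinner (k - l) (k - l))"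
      using cnorm_commute[of l k] by (metis cnorm_sq)
    ultimately have "Re (cinner (k - l) (k - l)) + 4 * h m = 2 * h k + 2 * h l"
      using parallelogram[of "x0 - k" "x0 - l"] cinner_scale2[of "x0 - m"] unfolding h_def by simp
    moreover have "d2 \<le> h m" using d2le half_mem[OF that] m_def by simp
    ultimately show ?thesis by linarith
  qed
  have cauchy: "\<forall>e>0. \<exists>N::nat. \<forall>m\<ge>N. \<forall>n\<ge>N. sqrt (Re (cinner (ks m - ks n) (ks m - ks n))) < e"
  proof (intro allI impI)
    fix e :: real assume e: "e > 0"
    obtain N where N: "inverse (real (Suc N)) < e^2 / 4" using reals_Archimedean[of "e^2/4"] e by auto
    have "\<forall>m\<ge>N. \<forall>n\<ge>N. sqrt (Re (cinner (ks m - ks n) (ks m - ks n))) < e"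
    proof (intro allI impI)
      fix m n assume mn: "m \<ge> N" "n \<ge> N"
      have im: "1 / (real m + 1) \<le> inverse (real (Suc N))" using mn
        by (simp add: inverse_eq_divide frac_le)
      have inn: "1 / (real n + 1) \<le> inverse (real (Suc N))" using mn
        by (simp add: inverse_eq_divide frac_le)
      have "Re (cinner (ks m - ks n) (ks m - ks n)) \<le> 2 * h (ks m) + 2 * h (ks n) - 4 * d2"
        using pk[OF ksK ksK] .
      also have "\<dots> < 2 * (1 / (real m + 1)) + 2 * (1 / (real n + 1))"
        using ksh[of m] ksh[of n] by linarith
      also have "\<dots> \<le> e^2" using im inn N by linarith
      finally have "Re (cinner (ks m - ks n) (ks m - ks n)) < e^2" .
      thus "sqrt (Re (cinner (ks m - ks n) (ks m - ks n))) < e"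
        using e real_sqrt_less_iff[of _ "e^2"] by (simp add: real_less_lsqrt cinner_self_Re_ge0)
    qed
    thus "\<exists>N::nat. \<forall>m\<ge>N. \<forall>n\<ge>N. sqrt (Re (cinner (ks m - ks n) (ks m - ks n))) < e" by blast
  qed
  obtain L where L: "\<forall>e>0. \<exists>N::nat. \<forall>n\<ge>N. cnorm (ks n - L) < e"
    using cauchy_complete[of ks, OF cauchy] unfolding cnorm_def by blast
  have gL: "g L = 0"
  proof (rule ccontr)
    assume ne: "g L \<noteq> 0"
    define e where "e = cmod (g L) / (K + 1)"
    have e: "e > 0" using ne Kpos unfolding e_def by simp
    then obtain N where "\<forall>n\<ge>N. cnorm (ks n - L) < e" using L by blast
    hence lt: "cnorm (L - ks N) < e" using cnorm_commute by (metis order_refl)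
    have "g (L - ks N) = g L" using lin(2) ksK[of N] unfolding Ks_def by simp
    hence "cmod (g L) \<le> K * cnorm (L - ks N)" using bnd by metis
    also have "\<dots> \<le> K * e" using lt Kpos by (simp add: mult_left_mono)
    also have "\<dots> < cmod (g L)" unfolding e_def using ne Kpos by (simp add: field_simps)
    finally show False by simp
  qed
  hence LK: "L \<in> Ks" unfolding Ks_def by simp
  have hL: "h L \<le> d2"
  proof -
    have "cnorm (x0 - L) \<le> sqrt d2"
    proof (rule eps_le)
      fix e :: real assume e: "e > 0"
      obtain N1 where N1: "\<forall>n\<ge>N1. cnorm (ks n - L) < e/2" using L e by (meson half_gt_zero)
      obtain N2 where N2: "inverse (real (Suc N2)) < (e/2)^2" using reals_Archimedean[of "(e/2)^2"] e by auto
      define n where "n = max N1 N2"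
      have c1: "cnorm (ks n - L) < e/2" using N1 n_def by simp
      have "1 / (real n + 1) \<le> inverse (real (Suc N2))" unfolding n_def
        by (simp add: inverse_eq_divide frac_le)
      hence inv: "1 / (real n + 1) < (e/2)^2" using N2 by linarith
      have "cnorm (x0 - ks n) = sqrt (h (ks n))" unfolding cnorm_def h_def ..
      also have "\<dots> \<le> sqrt (d2 + (e/2)^2)" using ksh[of n] inv by simp
      also have "\<dots> \<le> sqrt d2 + sqrt ((e/2)^2)" using d2nn by (intro sqrt_add_le_add_sqrt) auto
      also have "\<dots> = sqrt d2 + e/2" using e by simp
      finally have c2: "cnorm (x0 - ks n) \<le> sqrt d2 + e/2" .
      have "x0 - L = (x0 - ks n) + (ks n - L)" by simp
      hence "cnorm (x0 - L) \<le> cnorm (x0 - ks n) + cnorm (ks n - L)" using cnorm_triangle by metis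
      thus "cnorm (x0 - L) < sqrt d2 + e" using c1 c2 by linarith
    qed
    hence "(cnorm (x0 - L))^2 \<le> (sqrt d2)^2" using cnorm_ge0 by (intro power_mono) auto
    thus ?thesis using d2nn unfolding h_def by (simp add: cnorm_sq)
  qed
  define w where "w = x0 - L"
  have orth: "cinner w k = 0" if kK: "k \<in> Ks" for k
  proof (rule ccontr)
    assume ne: "cinner w k \<noteq> 0"
    define a where "a = cinner w k"
    define A where "A = (cmod a)^2"
    define kk where "kk = Re (cinner k k)"
    define s where "s = 1 / (kk + 1)"
    have kk0: "kk \<ge> 0" unfolding kk_def by (rule cinner_self_Re_ge0)
    have s0: "s > 0" unfolding s_def using kk0 by simp
    have skk: "s * kk < 1" unfolding s_def using kk0 by (simp add: field_simps)
    have A0: "A > 0" unfolding A_def a_def using ne by simp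
    define t where "t = complex_of_real s * cnj a"
    have mem: "L + scaleC t k \<in> Ks" using LK kK add hom unfolding Ks_def by simp
    have "h L \<le> h (L + scaleC t k)" using hL d2le[OF mem] by linarith
    moreover have "x0 - (L + scaleC t k) = w - scaleC t k" unfolding w_def by simp
    ultimately have ineq: "Re (cinner w w) \<le> Re (cinner (w - scaleC t k) (w - scaleC t k))"
      unfolding h_def w_def by simp
    have e1: "cinner k w = cnj a" unfolding a_def by (rule cinner_commute)
    have kr: "cinner k k = complex_of_real kk" unfolding kk_def by (rule cinner_self_real)
    have acnj: "a * cnj a = complex_of_real A" unfolding A_def by (rule complex_norm_square[symmetric])
    have "cinner (w - scaleC t k) (w - scaleC t k) = cinner w w - cinner w (scaleC t k) - (cinner (scaleC t k) w - cinner (scaleC t k) (scaleC t k))"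
      by (simp add: cinner_diff_left cinner_diff_right)
    also have "\<dots> = cinner w w - t * a - cnj t * cnj a + cnj t * t * cinner k k"
      unfolding cinner_scaleC_left cinner_scaleC_right e1 a_def by (simp add: algebra_simps)
    also have "\<dots> = cinner w w - complex_of_real (2 * s * A - s^2 * A * kk)"
      unfolding t_def kr using acnj
      by (simp add: algebra_simps power2_eq_square) (metis (no_types, lifting) mult.commute mult.left_commute)
    finally have "Re (cinner (w - scaleC t k) (w - scaleC t k)) = Re (cinner w w) - (2 * s * A - s^2 * A * kk)"
      by simp
    with ineq have "0 \<le> s * A * (s * kk - 2)" by (simp add: algebra_simps power2_eq_square)
    moreover have "s * A * (s * kk - 2) < 0" using s0 A0 skk by (simp add: mult_pos_neg)
    ultimately show False by linarith
  qed
  have wne: "g w \<noteq> 0" unfolding w_def using lin(2) gL gx0 by simp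
  have ww: "cinner w w \<noteq> 0" using wne lin(1) cinner_eq_zero_iff by metis
  show ?thesis
  proof (intro exI allI)
    fix x
    define y where "y = scaleC (g x) w - scaleC (g w) x"
    have "g y = 0" unfolding y_def using lin(2) hom by (simp add: mult.commute)
    hence "cinner w y = 0" using orth unfolding Ks_def by simp
    hence "g x * cinner w w = g w * cinner w x"
      unfolding y_def by (simp add: cinner_diff_right cinner_scaleC_right)
    hence gx: "g x = (g w / cinner w w) * cinner w x" using ww by (simp add: field_simps)
    show "g x = cinner (scaleC (cnj (g w / cinner w w)) w) x"
      unfolding cinner_scaleC_left gx by simp
  qed
qed



lemma bounded_add: "bounded_op A \<Longrightarrow> A (x + y) = A x + A y"
  unfolding bounded_op_def by auto
lemma bounded_hom: "bounded_op A \<Longrightarrow> A (scaleC c x) = scaleC c (A x)"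
  unfolding bounded_op_def by auto
lemma cnorm_zero[simp]: "cnorm 0 = 0" by (simp add: cnorm_zero_iff)

lemma bounded_zero_pt: "bounded_op A \<Longrightarrow> A 0 = 0"
  using bounded_hom[of A 0 0] by simp
lemma bounded_uminus_pt: "bounded_op A \<Longrightarrow> A (- x) = - A x"
  using bounded_hom[of A "-1" x] by (simp add: scaleC_minus1)
lemma bounded_diff_pt: "bounded_op A \<Longrightarrow> A (x - y) = A x - A y"
  using bounded_add[of A x "-y"] bounded_uminus_pt[of A y] by simp

lemma bounded_K: "bounded_op A \<Longrightarrow> \<exists>K\<ge>0. \<forall>x. cnorm (A x) \<le> K * cnorm x"
proof -
  assume "bounded_op A"
  then obtain K where K: "\<forall>x. cnorm (A x) \<le> K * cnorm x" unfolding bounded_op_def by blast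
  have "\<forall>x. cnorm (A x) \<le> max K 0 * cnorm x"
  proof
    fix x
    have "cnorm (A x) \<le> K * cnorm x" using K by blast
    also have "K * cnorm x \<le> max K 0 * cnorm x" using cnorm_ge0[of x] by (simp add: mult_right_mono)
    finally show "cnorm (A x) \<le> max K 0 * cnorm x" .
  qed
  thus ?thesis by (intro exI[of _ "max K 0"]) simp
qed

lemma adj_exists: "bounded_op A \<Longrightarrow> \<exists>B. \<forall>x y. cinner (A x) y = cinner x (B y)"
proof -
  assume bA: "bounded_op A"
  obtain K where K0: "K \<ge> 0" and K: "\<forall>x. cnorm (A x) \<le> K * cnorm x" using bounded_K[OF bA] by blast
  have "\<forall>y. \<exists>z. \<forall>x. cinner y (A x) = cinner z x"
  proof
    fix y
    show "\<exists>z. \<forall>x. cinner y (A x) = cinner z x"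
    proof (rule riesz[where K = "cnorm y * K"])
      show "\<forall>x1 x2. cinner y (A (x1 + x2)) = cinner y (A x1) + cinner y (A x2)"
        using bA by (simp add: bounded_add cinner_add_right)
      show "\<forall>c x. cinner y (A (scaleC c x)) = c * cinner y (A x)"
        using bA by (simp add: bounded_hom cinner_scaleC_right)
      show "\<forall>x. cmod (cinner y (A x)) \<le> cnorm y * K * cnorm x"
      proof
        fix x
        have "cmod (cinner y (A x)) \<le> cnorm y * cnorm (A x)" by (rule CS)
        also have "\<dots> \<le> cnorm y * (K * cnorm x)" using K cnorm_ge0[of y] by (simp add: mult_left_mono)
        finally show "cmod (cinner y (A x)) \<le> cnorm y * K * cnorm x" by (simp add: mult.assoc)
      qed
    qed
  qed
  then obtain B where B: "\<forall>y x. cinner y (A x) = cinner (B y) x" by metis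
  have "\<forall>x y. cinner (A x) y = cinner x (B y)"
  proof (intro allI)
    fix x y
    have "cinner (A x) y = cnj (cinner y (A x))" by (rule cinner_commute)
    also have "\<dots> = cnj (cinner (B y) x)" using B by simp
    also have "\<dots> = cinner x (B y)" by (simp add: cinner_commute[of x "B y"])
    finally show "cinner (A x) y = cinner x (B y)" .
  qed
  thus ?thesis by blast
qed

lemma adj_unique:
  assumes "\<forall>x y. cinner (A x) y = cinner x (B y)" "\<forall>x y. cinner (A x) y = cinner x (C y)"
  shows "B = C"
proof
  fix y show "B y = C y" by (rule cinner_ext) (use assms in metis)
qed

lemma adj_eq: "\<forall>x y. cinner (A x) y = cinner x (B y) \<Longrightarrow> adj A = B"
proof -
  assume h: "\<forall>x y. cinner (A x) y = cinner x (B y)"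
  show ?thesis unfolding adj_def
  proof (rule the_equality)
    show "\<forall>x y. cinner (A x) y = cinner x (B y)" by (rule h)
    fix C assume "\<forall>x y. cinner (A x) y = cinner x (C y)"
    thus "C = B" using adj_unique h by metis
  qed
qed

lemma adj_rel: "bounded_op A \<Longrightarrow> cinner (A x) y = cinner x (adj A y)"
proof -
  assume "bounded_op A"
  then obtain B where B: "\<forall>x y. cinner (A x) y = cinner x (B y)" using adj_exists by blast
  hence "adj A = B" by (rule adj_eq)
  thus ?thesis using B by simp
qed

lemma adj_rel2: "bounded_op A \<Longrightarrow> cinner (adj A x) y = cinner x (A y)"
  by (metis adj_rel cinner_commute)

lemma adj_bounded: "bounded_op A \<Longrightarrow> bounded_op (adj A)"
proof -
  assume bA: "bounded_op A"
  define B where "B = adj A"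
  have rel: "cinner (A x) y = cinner x (B y)" for x y unfolding B_def using adj_rel[OF bA] .
  obtain K where K0: "K \<ge> 0" and K: "\<forall>x. cnorm (A x) \<le> K * cnorm x" using bounded_K[OF bA] by blast
  have addB: "B (y1 + y2) = B y1 + B y2" for y1 y2
    by (rule cinner_ext) (simp add: rel[symmetric] cinner_add_right bA bounded_add)
  have homB: "B (scaleC c y) = scaleC c (B y)" for c y
    by (rule cinner_ext) (simp add: rel[symmetric] cinner_scaleC_right)
  have bndB: "cnorm (B y) \<le> K * cnorm y" for y
  proof (cases "cnorm (B y) = 0")
    case True thus ?thesis using K0 cnorm_ge0[of y] by simp
  next
    case False
    hence pos: "cnorm (B y) > 0" using cnorm_ge0[of "B y"] by linarith
    have "(cnorm (B y))^2 = Re (cinner (B y) (B y))" by (rule cnorm_sq)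
    also have "\<dots> = Re (cinner (A (B y)) y)" by (simp add: rel)
    also have "\<dots> \<le> cmod (cinner (A (B y)) y)" by (rule complex_Re_le_cmod)
    also have "\<dots> \<le> cnorm (A (B y)) * cnorm y" by (rule CS)
    also have "\<dots> \<le> K * cnorm (B y) * cnorm y" using K cnorm_ge0[of y] by (simp add: mult_right_mono)
    finally have "cnorm (B y) * cnorm (B y) \<le> cnorm (B y) * (K * cnorm y)"
      by (simp add: power2_eq_square algebra_simps)
    thus ?thesis using pos by simp
  qed
  show "bounded_op B" unfolding bounded_op_def using addB homB bndB by blast
qed

lemma bounded_id: "bounded_op id"
  unfolding bounded_op_def by (auto intro: exI[of _ 1])
lemma bounded_zero: "bounded_op op_zero"
  unfolding bounded_op_def op_zero_def by (auto intro: exI[of _ 0] simp: cnorm_ge0 cnorm_zero_iff)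

lemma bounded_plus: "bounded_op A \<Longrightarrow> bounded_op B \<Longrightarrow> bounded_op (op_plus A B)"
proof -
  assume bA: "bounded_op A" and bB: "bounded_op B"
  obtain K1 where K1: "\<forall>x. cnorm (A x) \<le> K1 * cnorm x" using bA unfolding bounded_op_def by blast
  obtain K2 where K2: "\<forall>x. cnorm (B x) \<le> K2 * cnorm x" using bB unfolding bounded_op_def by blast
  have "cnorm (A x + B x) \<le> (K1 + K2) * cnorm x" for x
    using cnorm_triangle[of "A x" "B x"] K1 K2 by (smt (verit) distrib_right)
  hence "\<exists>K. \<forall>x. cnorm (op_plus A B x) \<le> K * cnorm x" unfolding op_plus_def by blast
  thus ?thesis unfolding bounded_op_def using bA bB
    by (auto simp: op_plus_def bounded_add bounded_hom scaleC_add_right algebra_simps)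
qed

lemma bounded_uminus: "bounded_op A \<Longrightarrow> bounded_op (\<lambda>x. - A x)"
  unfolding bounded_op_def by (auto simp: cnorm_minus scaleC_minus_right)

lemma bounded_minus: "bounded_op A \<Longrightarrow> bounded_op B \<Longrightarrow> bounded_op (op_minus A B)"
proof -
  assume bA: "bounded_op A" and bB: "bounded_op B"
  have "op_minus A B = op_plus A (\<lambda>x. - B x)" unfolding op_minus_def op_plus_def by auto
  thus ?thesis using bounded_plus[OF bA bounded_uminus[OF bB]] by simp
qed

lemma bounded_comp: "bounded_op A \<Longrightarrow> bounded_op B \<Longrightarrow> bounded_op (A \<circ> B)"
proof -
  assume bA: "bounded_op A" and bB: "bounded_op B"
  obtain K1 where K10: "K1 \<ge> 0" and K1: "\<forall>x. cnorm (A x) \<le> K1 * cnorm x" using bounded_K[OF bA] by blast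
  obtain K2 where K2: "\<forall>x. cnorm (B x) \<le> K2 * cnorm x" using bB unfolding bounded_op_def by blast
  have "cnorm (A (B x)) \<le> (K1 * K2) * cnorm x" for x
  proof -
    have "cnorm (A (B x)) \<le> K1 * cnorm (B x)" using K1 by blast
    also have "\<dots> \<le> K1 * (K2 * cnorm x)" using K2 K10 by (simp add: mult_left_mono)
    finally show ?thesis by (simp add: mult.assoc)
  qed
  thus ?thesis unfolding bounded_op_def using bA bB by (auto simp: bounded_add bounded_hom)
qed

lemma bounded_scale: "bounded_op A \<Longrightarrow> bounded_op (op_scale c A)"
proof -
  assume bA: "bounded_op A"
  obtain K where K0: "K \<ge> 0" and K: "\<forall>x. cnorm (A x) \<le> K * cnorm x" using bounded_K[OF bA] by blast
  have "cnorm (scaleC c (A x)) \<le> (cmod c * K) * cnorm x" for x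
    using K by (simp add: cnorm_scaleC mult.assoc mult_left_mono)
  moreover have "scaleC c (scaleC d x) = scaleC d (scaleC c x)" for d and x :: 'a
    by (simp add: scaleC_scaleC mult.commute)
  ultimately show ?thesis unfolding bounded_op_def op_scale_def using bA
    by (auto simp: bounded_add bounded_hom scaleC_add_right)
qed



typedef (overloaded) ('h::chilbert_space) bop = "{A::'h op. bounded_op A}"
  morphisms rep abs
  by (intro exI[of _ id]) (simp add: bounded_id)

setup_lifting type_definition_bop

lemma rep_bounded: "bounded_op (rep a)" using rep[of a] by simp

instantiation bop :: (chilbert_space) "{real_algebra, monoid_mult}"
begin
lift_definition zero_bop :: "'a bop" is op_zero by (rule bounded_zero)
lift_definition one_bop :: "'a bop" is id by (rule bounded_id)
lift_definition plus_bop :: "'a bop \<Rightarrow> 'a bop \<Rightarrow> 'a bop" is op_plus by (rule bounded_plus)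
lift_definition minus_bop :: "'a bop \<Rightarrow> 'a bop \<Rightarrow> 'a bop" is op_minus by (rule bounded_minus)
lift_definition uminus_bop :: "'a bop \<Rightarrow> 'a bop" is "\<lambda>A x. - A x" by (rule bounded_uminus)
lift_definition times_bop :: "'a bop \<Rightarrow> 'a bop \<Rightarrow> 'a bop" is "(\<circ>)" by (rule bounded_comp)
lift_definition scaleR_bop :: "real \<Rightarrow> 'a bop \<Rightarrow> 'a bop" is "\<lambda>r. op_scale (complex_of_real r)"
  by (rule bounded_scale)
instance
proof
  fix a b c :: "'a bop" and r s :: real
  show "a + b + c = a + (b + c)" by transfer (auto simp: op_plus_def add.assoc)
  show "a + b = b + a" by transfer (auto simp: op_plus_def add.commute)
  show "0 + a = a" by transfer (auto simp: op_plus_def op_zero_def)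
  show "- a + a = 0" by transfer (auto simp: op_plus_def op_zero_def)
  show "a - b = a + - b" by transfer (auto simp: op_plus_def op_minus_def)
  show "a * b * c = a * (b * c)" by transfer auto
  show "(a + b) * c = a * c + b * c" by transfer (auto simp: op_plus_def)
  show "a * (b + c) = a * b + a * c" by transfer (auto simp: op_plus_def bounded_add)
  show "r *\<^sub>R (a + b) = r *\<^sub>R a + r *\<^sub>R b" by transfer (auto simp: op_plus_def op_scale_def scaleC_add_right)
  show "(r + s) *\<^sub>R a = r *\<^sub>R a + s *\<^sub>R a" by transfer (auto simp: op_plus_def op_scale_def scaleC_add_left)
  show "r *\<^sub>R s *\<^sub>R a = (r * s) *\<^sub>R a" by transfer (auto simp: op_scale_def scaleC_scaleC)
  show "1 *\<^sub>R a = a" by transfer (auto simp: op_scale_def scaleC_one)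
  show "r *\<^sub>R a * b = r *\<^sub>R (a * b)" by transfer (auto simp: op_scale_def)
  show "a * r *\<^sub>R b = r *\<^sub>R (a * b)" by transfer (auto simp: op_scale_def bounded_hom)
  show "1 * a = a" by transfer auto
  show "a * 1 = a" by transfer auto
qed
end

lift_definition star :: "'a::chilbert_space bop \<Rightarrow> 'a bop" is adj by (rule adj_bounded)
lift_definition sc :: "complex \<Rightarrow> 'a::chilbert_space bop \<Rightarrow> 'a bop" is op_scale by (rule bounded_scale)

lemmas rep_eqs = zero_bop.rep_eq one_bop.rep_eq plus_bop.rep_eq minus_bop.rep_eq uminus_bop.rep_eq
  times_bop.rep_eq scaleR_bop.rep_eq star.rep_eq sc.rep_eq

lemma rep_pt: "rep (a + b) x = rep a x + rep b x" "rep (a - b) x = rep a x - rep b x"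
  "rep (- a) x = - rep a x" "rep (a * b) x = rep a (rep b x)" "rep 1 x = x" "rep 0 x = 0"
  "rep (r *\<^sub>R a) x = scaleC (complex_of_real r) (rep a x)" "rep (sc c a) x = scaleC c (rep a x)"
  by (simp_all add: rep_eqs op_plus_def op_minus_def op_scale_def op_zero_def)

lemma star_rel: "cinner (rep a x) y = cinner x (rep (star a) y)"
  by (simp add: star.rep_eq adj_rel rep_bounded)
lemma star_rel2: "cinner (rep (star a) x) y = cinner x (rep a y)"
  by (simp add: star.rep_eq adj_rel2 rep_bounded)

lemma star_eqI: "(\<And>x y. cinner (rep a x) y = cinner x (rep b y)) \<Longrightarrow> star a = b"
  by (metis adj_eq rep_inject star.rep_eq)

lemma star_add: "star (a + b) = star a + star b"
  by (rule star_eqI) (simp add: rep_pt cinner_add_left cinner_add_right star_rel)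
lemma star_diff: "star (a - b) = star a - star b"
  by (rule star_eqI) (simp add: rep_pt cinner_diff_left cinner_diff_right star_rel)
lemma star_uminus: "star (- a) = - star a"
  by (rule star_eqI) (simp add: rep_pt cinner_minus_left cinner_minus_right star_rel)
lemma star_mult: "star (a * b) = star b * star a"
  by (rule star_eqI) (simp add: rep_pt star_rel)
lemma star_one: "star 1 = 1"
  by (rule star_eqI) (simp add: rep_pt)
lemma star_zero: "star 0 = 0"
  by (rule star_eqI) (simp add: rep_pt)
lemma star_scaleR: "star (r *\<^sub>R a) = r *\<^sub>R star a"
  by (rule star_eqI) (simp add: rep_pt cinner_scaleC_left cinner_scaleC_right star_rel)
lemma star_sc: "star (sc c a) = sc (cnj c) (star a)"
  by (rule star_eqI) (simp add: rep_pt cinner_scaleC_left cinner_scaleC_right star_rel)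
lemma star_star: "star (star a) = a"
  by (rule star_eqI) (simp add: star_rel2)

lemma sc_mult_left: "sc c a * b = sc c (a * b)"
  by transfer (auto simp: op_scale_def)
lemma sc_mult_right: "a * sc c b = sc c (a * b)"
  by transfer (auto simp: op_scale_def bounded_hom)
lemma sc_add: "sc c (a + b) = sc c a + sc c b"
  by transfer (auto simp: op_scale_def op_plus_def scaleC_add_right)
lemma sc_sc: "sc c (sc d a) = sc (c * d) a"
  by transfer (auto simp: op_scale_def scaleC_scaleC)
lemma sc_one: "sc 1 a = a"
  by transfer (auto simp: op_scale_def scaleC_one)

definition pos :: "'a::chilbert_space bop \<Rightarrow> bool" where
  "pos a \<longleftrightarrow> (\<forall>x. Im (cinner x (rep a x)) = 0 \<and> 0 \<le> Re (cinner x (rep a x)))"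

lemma pos_star_mult: "pos (star b * b)"
  unfolding pos_def by (simp add: rep_pt star_rel[symmetric] cinner_self_Im cinner_self_Re_ge0)

lemma pos_conj: "pos a \<Longrightarrow> pos (star b * a * b)"
  unfolding pos_def by (simp add: rep_pt star_rel[symmetric])

lemma pos_add: "pos a \<Longrightarrow> pos b \<Longrightarrow> pos (a + b)"
  unfolding pos_def by (simp add: rep_pt cinner_add_right)

lemma pos_scaleR: "pos a \<Longrightarrow> r \<ge> 0 \<Longrightarrow> pos (r *\<^sub>R a)"
  unfolding pos_def by (simp add: rep_pt cinner_scaleC_right)

lemma pos_one: "pos 1"
  unfolding pos_def by (simp add: rep_pt cinner_self_Im cinner_self_Re_ge0)



definition ff :: "'a::{real_algebra,monoid_mult} \<Rightarrow> 'a" where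
  "ff t = (3/4) *\<^sub>R t - (1/16) *\<^sub>R (t * t * t)"

definition PP :: "'a::{real_algebra,monoid_mult} \<Rightarrow> real \<Rightarrow> real \<Rightarrow> real \<Rightarrow> real \<Rightarrow> real \<Rightarrow> 'a" where
  "PP t a0 a1 a2 a3 a4 = a0 *\<^sub>R 1 + a1 *\<^sub>R t + a2 *\<^sub>R (t * t) + a3 *\<^sub>R (t * t * t) + a4 *\<^sub>R (t * t * t * t)"

lemma PP_add: "PP t a0 a1 a2 a3 a4 + PP t b0 b1 b2 b3 b4 = PP t (a0+b0) (a1+b1) (a2+b2) (a3+b3) (a4+b4)"
  unfolding PP_def by (simp add: algebra_simps)
lemma PP_diff: "PP t a0 a1 a2 a3 a4 - PP t b0 b1 b2 b3 b4 = PP t (a0-b0) (a1-b1) (a2-b2) (a3-b3) (a4-b4)"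
  unfolding PP_def by (simp add: algebra_simps)
lemma PP_scale: "r *\<^sub>R PP t a0 a1 a2 a3 a4 = PP t (r*a0) (r*a1) (r*a2) (r*a3) (r*a4)"
  unfolding PP_def by (simp add: algebra_simps)
lemma PP_mult: "PP t a0 a1 a2 0 0 * PP t b0 b1 b2 0 0 =
   PP t (a0*b0) (a0*b1+a1*b0) (a0*b2+a1*b1+a2*b0) (a1*b2+a2*b1) (a2*b2)"
  unfolding PP_def by (simp add: algebra_simps)
lemma PP_mult3: "PP t a0 a1 a2 0 0 * PP t b0 b1 0 0 0 =
   PP t (a0*b0) (a0*b1+a1*b0) (a1*b1+a2*b0) (a2*b1) 0"
  unfolding PP_def by (simp add: algebra_simps)
lemma PP_1: "(1::'a::{real_algebra,monoid_mult}) = PP t 1 0 0 0 0" unfolding PP_def by simp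
lemma PP_c: "c *\<^sub>R (1::'a::{real_algebra,monoid_mult}) = PP t c 0 0 0 0" unfolding PP_def by simp
lemma PP_t: "t = PP t 0 1 0 0 0" unfolding PP_def by simp
lemma PP_t3: "t * t * t = PP t 0 0 0 1 0" unfolding PP_def by simp

lemma proj_unit: "(p::'a::{real_algebra,monoid_mult}) * p = p \<Longrightarrow> (2 *\<^sub>R p - 1) * (2 *\<^sub>R p - 1) = 1"
  by (simp add: algebra_simps scaleR_2)

lemma ff_le1: "1 - ff (t::'a::{real_algebra,monoid_mult}) = (1/16) *\<^sub>R ((2 *\<^sub>R 1 - t) * (t + 4 *\<^sub>R 1) * (2 *\<^sub>R 1 - t))"
proof -
  have a: "2 *\<^sub>R 1 - t = PP t 2 (-1) 0 0 0" by (subst PP_t, subst PP_c[of 2 t], simp add: PP_diff)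
  have b: "t + 4 *\<^sub>R 1 = PP t 4 1 0 0 0" by (subst PP_t, subst PP_c[of 4 t], simp add: PP_add)
  have "1 - ff t = PP t 1 (-3/4) 0 (1/16) 0" unfolding ff_def
    by (subst PP_t3, subst PP_1[of t], subst (2) PP_t) (simp add: PP_scale PP_diff)
  also have "\<dots> = (1/16) *\<^sub>R ((2 *\<^sub>R 1 - t) * (t + 4 *\<^sub>R 1) * (2 *\<^sub>R 1 - t))"
    unfolding a b by (simp add: PP_mult PP_mult3 PP_scale)
  finally show ?thesis .
qed

lemma ff_ge1: "1 + ff (t::'a::{real_algebra,monoid_mult}) = (1/16) *\<^sub>R ((2 *\<^sub>R 1 + t) * (4 *\<^sub>R 1 - t) * (2 *\<^sub>R 1 + t))"
proof -
  have a: "2 *\<^sub>R 1 + t = PP t 2 1 0 0 0" by (subst PP_t, subst PP_c[of 2 t], simp add: PP_add)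
  have b: "4 *\<^sub>R 1 - t = PP t 4 (-1) 0 0 0" by (subst PP_t, subst PP_c[of 4 t], simp add: PP_diff)
  have "1 + ff t = PP t 1 (3/4) 0 (-1/16) 0" unfolding ff_def
    by (subst PP_t3, subst PP_1[of t], subst (2) PP_t) (simp add: PP_scale PP_diff PP_add)
  also have "\<dots> = (1/16) *\<^sub>R ((2 *\<^sub>R 1 + t) * (4 *\<^sub>R 1 - t) * (2 *\<^sub>R 1 + t))"
    unfolding a b by (simp add: PP_mult PP_mult3 PP_scale)
  finally show ?thesis .
qed

lemma PP_t2: "t * t = PP t 0 0 1 0 0" unfolding PP_def by simp

lemma chsh_identity:
  fixes u v :: "'a::{real_algebra,monoid_mult}"
  assumes uu: "u * u = 1" and vv: "v * v = 1"
  shows "ff (u + v) * (u + v) + ff (u - v) * (u - v) = 2 *\<^sub>R 1 + (1/8) *\<^sub>R ((v * u - u * v) * (u * v - v * u))"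
proof -
  have uu': "u * (u * z) = z" for z by (metis uu mult.assoc mult_1_left)
  have vv': "v * (v * z) = z" for z by (metis vv mult.assoc mult_1_left)
  define X where "X = u * v + v * u"
  have ss: "(u + v) * (u + v) = PP X 2 1 0 0 0" unfolding PP_def X_def
    by (simp add: algebra_simps uu vv scaleR_2)
  have dd: "(u - v) * (u - v) = PP X 2 (-1) 0 0 0" unfolding PP_def X_def
    by (simp add: algebra_simps scaleR_2) (simp add: uu vv)
  define K where "K = u * (v * (u * v)) + v * (u * (v * u))"
  have XX: "X * X = 2 *\<^sub>R 1 + K" unfolding X_def K_def
    by (simp add: algebra_simps uu' vv' scaleR_2) (simp add: uu vv)
  have W: "(v * u - u * v) * (u * v - v * u) = 2 *\<^sub>R 1 - K" unfolding K_def
    by (simp add: algebra_simps uu' vv' scaleR_2) (simp add: uu vv)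
  have four: "4 *\<^sub>R (1::'a) = 2 *\<^sub>R 1 + 2 *\<^sub>R 1" by (simp add: scaleR_add_left[symmetric])
  have W2: "(v * u - u * v) * (u * v - v * u) = PP X 4 0 (-1) 0 0"
  proof -
    have "PP X 4 0 (-1) 0 0 = 4 *\<^sub>R 1 - X * X" unfolding PP_def by simp
    also have "\<dots> = 2 *\<^sub>R 1 - K" unfolding XX four by simp
    finally show ?thesis using W by simp
  qed
  have gen: "ff s * s = (3/4) *\<^sub>R (s * s) - (1/16) *\<^sub>R ((s * s) * (s * s))" for s :: 'a
    unfolding ff_def by (simp add: algebra_simps)
  show ?thesis unfolding gen ss dd W2
    by (subst PP_c[of 2 X]) (simp add: PP_mult PP_scale PP_add PP_diff)
qed

lemma comm_identity:
  fixes p q :: "'a::{real_algebra,monoid_mult}"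
  shows "(2 *\<^sub>R q - 1) * (2 *\<^sub>R p - 1) - (2 *\<^sub>R p - 1) * (2 *\<^sub>R q - 1) = 4 *\<^sub>R (q * p - p * q)"
  by (simp add: algebra_simps)



lemma four1: "4 *\<^sub>R (1::'a::{real_algebra,monoid_mult}) = 2 *\<^sub>R 1 + 2 *\<^sub>R 1"
  by (simp add: scaleR_add_left[symmetric])

lemma real_lin_zero: "(\<And>s::real. 0 \<le> s * k + c) \<Longrightarrow> k = 0"
proof (rule ccontr)
  assume h: "\<And>s::real. 0 \<le> s * k + c" and k: "k \<noteq> 0"
  have "0 \<le> (-(\<bar>c\<bar> + 1) / k) * k + c" by (rule h)
  also have "\<dots> = c - (\<bar>c\<bar> + 1)" using k by simp
  finally show False by linarith
qed

lemma real_lin_zero2: "(\<And>s::real. s * k + c = 0) \<Longrightarrow> k = 0"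
  by (metis add.commute add_cancel_right_right mult_1 mult_zero_left)

lemma complex_kill:
  assumes h: "\<And>t. Im (cnj t * \<alpha> + t * \<beta> + \<gamma>) = 0 \<and> 0 \<le> Re (cnj t * \<alpha> + t * \<beta> + \<gamma>)"
  shows "\<alpha> = 0"
proof -
  have r1: "0 \<le> s * (Re \<alpha> + Re \<beta>) + Re \<gamma>" for s
    using h[of "complex_of_real s"] by (simp add: algebra_simps)
  have r2: "s * (Im \<alpha> + Im \<beta>) + Im \<gamma> = 0" for s
    using h[of "complex_of_real s"] by (simp add: algebra_simps)
  have r3: "0 \<le> s * (Im \<alpha> - Im \<beta>) + Re \<gamma>" for s
    using h[of "\<i> * complex_of_real s"] by (simp add: algebra_simps)
  have r4: "s * (Re \<beta> - Re \<alpha>) + Im \<gamma> = 0" for s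
    using h[of "\<i> * complex_of_real s"] by (simp add: algebra_simps)
  have "Re \<alpha> + Re \<beta> = 0" by (rule real_lin_zero[OF r1])
  moreover have "Re \<beta> - Re \<alpha> = 0" by (rule real_lin_zero2[OF r4])
  moreover have "Im \<alpha> - Im \<beta> = 0" by (rule real_lin_zero[OF r3])
  moreover have "Im \<alpha> + Im \<beta> = 0" by (rule real_lin_zero2[OF r2])
  ultimately show ?thesis by (simp add: complex_eq_iff)
qed



lemma commutant_bounded: "A \<in> commutant S \<Longrightarrow> bounded_op A"
  unfolding commutant_def by simp

lemma comm_mem_iff: "rep a \<in> commutant S \<longleftrightarrow> (\<forall>A\<in>S. \<forall>x. A (rep a x) = rep a (A x))"
  unfolding commutant_def using rep_bounded[of a] by (auto simp: fun_eq_iff)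

locale bset =
  fixes S :: "'a::chilbert_space op set"
  assumes Sb: "\<And>A. A \<in> S \<Longrightarrow> bounded_op A"
begin

abbreviation "C \<equiv> commutant S"

lemma C_add: "rep a \<in> C \<Longrightarrow> rep b \<in> C \<Longrightarrow> rep (a + b) \<in> C"
  unfolding comm_mem_iff by (auto simp: rep_pt bounded_add Sb)
lemma C_mult: "rep a \<in> C \<Longrightarrow> rep b \<in> C \<Longrightarrow> rep (a * b) \<in> C"
  unfolding comm_mem_iff by (auto simp: rep_pt)
lemma C_diff: "rep a \<in> C \<Longrightarrow> rep b \<in> C \<Longrightarrow> rep (a - b) \<in> C"
  unfolding comm_mem_iff by (auto simp: rep_pt bounded_diff_pt Sb)
lemma C_uminus: "rep a \<in> C \<Longrightarrow> rep (- a) \<in> C"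
  unfolding comm_mem_iff by (auto simp: rep_pt bounded_uminus_pt Sb)
lemma C_scaleR: "rep a \<in> C \<Longrightarrow> rep (r *\<^sub>R a) \<in> C"
  unfolding comm_mem_iff by (auto simp: rep_pt bounded_hom Sb)
lemma C_sc: "rep a \<in> C \<Longrightarrow> rep (sc c a) \<in> C"
  unfolding comm_mem_iff by (auto simp: rep_pt bounded_hom Sb)
lemma C_one: "rep 1 \<in> C"
  unfolding comm_mem_iff by (auto simp: rep_pt)

lemmas C_closed = C_add C_mult C_diff C_uminus C_scaleR C_sc C_one

end

lemma bset_commutant: "bset (commutant S)"
  unfolding bset_def commutant_def by auto

lemma vN_closed:
  assumes "von_neumann_algebra N"
  shows "rep a \<in> N \<Longrightarrow> rep b \<in> N \<Longrightarrow> rep (a + b) \<in> N"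
    and "rep a \<in> N \<Longrightarrow> rep b \<in> N \<Longrightarrow> rep (a * b) \<in> N"
    and "rep a \<in> N \<Longrightarrow> rep b \<in> N \<Longrightarrow> rep (a - b) \<in> N"
    and "rep a \<in> N \<Longrightarrow> rep (- a) \<in> N"
    and "rep a \<in> N \<Longrightarrow> rep (r *\<^sub>R a) \<in> N"
    and "rep a \<in> N \<Longrightarrow> rep (sc c a) \<in> N"
    and "rep 1 \<in> N"
proof -
  have N: "N = commutant (commutant N)" using assms unfolding von_neumann_algebra_def by simp
  interpret bset "commutant N" by (rule bset_commutant)
  show "rep a \<in> N \<Longrightarrow> rep b \<in> N \<Longrightarrow> rep (a + b) \<in> N" using C_add N by metis
  show "rep a \<in> N \<Longrightarrow> rep b \<in> N \<Longrightarrow> rep (a * b) \<in> N" using C_mult N by metis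
  show "rep a \<in> N \<Longrightarrow> rep b \<in> N \<Longrightarrow> rep (a - b) \<in> N" using C_diff N by metis
  show "rep a \<in> N \<Longrightarrow> rep (- a) \<in> N" using C_uminus N by metis
  show "rep a \<in> N \<Longrightarrow> rep (r *\<^sub>R a) \<in> N" using C_scaleR N by metis
  show "rep a \<in> N \<Longrightarrow> rep (sc c a) \<in> N" using C_sc N by metis
  show "rep 1 \<in> N" using C_one N by metis
qed

lemma sa_contr:
  assumes "star a = a" "pos (a + 1)" "pos (1 - a)"
  shows "sa_contraction (rep a)"
proof -
  have "adj (rep a) = rep a" using assms(1) by (metis star.rep_eq)
  hence sa: "self_adjoint (rep a)" unfolding self_adjoint_def using rep_bounded by simp
  have "op_le (op_scale (-1) id) (rep a)"
    using assms(2) unfolding op_le_def pos_def by (simp add: rep_pt op_scale_def scaleC_minus1)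
  moreover have "op_le (rep a) id"
    using assms(3) unfolding op_le_def pos_def by (simp add: rep_pt)
  ultimately show ?thesis using sa unfolding sa_contraction_def by simp
qed

lemma pos_proj: "star p = p \<Longrightarrow> p * p = p \<Longrightarrow> pos p"
  using pos_star_mult[of p] by simp

lemma pos_coproj: "star p = p \<Longrightarrow> p * p = p \<Longrightarrow> pos (1 - p)"
proof -
  assume s: "star p = p" and pp: "p * p = p"
  have "star (1 - p) * (1 - p) = 1 - p" using s pp by (simp add: star_diff star_one algebra_simps)
  thus ?thesis using pos_star_mult[of "1 - p"] by simp
qed

lemma uminus_sc: "- a = sc (-1) a"
  by transfer (auto simp: op_scale_def scaleC_minus1)



lemma proj_facts:
  assumes "projection E"
  shows "rep (abs E) = E" "star (abs E) = abs E" "abs E * abs E = abs E"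
proof -
  have b: "bounded_op E" and a: "adj E = E" and ee: "E \<circ> E = E"
    using assms unfolding projection_def self_adjoint_def by auto
  show r: "rep (abs E) = E" using b by (simp add: abs_inverse)
  show "star (abs E) = abs E" by (metis r a star.rep_eq rep_inverse)
  show "abs E * abs E = abs E" by (metis r ee times_bop.rep_eq rep_inverse)
qed

lemma star_ff: "star t = t \<Longrightarrow> star (ff t) = ff t"
  unfolding ff_def by (simp add: star_diff star_scaleR star_mult mult.assoc)

lemma ff_contr:
  assumes st: "star t = t" and p1: "pos (4 *\<^sub>R 1 - t)" and p2: "pos (t + 4 *\<^sub>R 1)"
  shows "sa_contraction (rep (ff t))"
proof (rule sa_contr)
  show "star (ff t) = ff t" using st by (rule star_ff)
  define b where "b = 2 *\<^sub>R 1 + t"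
  have sb: "star b = b" unfolding b_def using st by (simp add: star_add star_scaleR star_one)
  have "ff t + 1 = (1/16) *\<^sub>R (star b * (4 *\<^sub>R 1 - t) * b)"
    by (subst sb, unfold b_def) (use ff_ge1[of t] in \<open>simp add: add.commute\<close>)
  thus "pos (ff t + 1)" using pos_conj[OF p1, of b] by (simp add: pos_scaleR)
  define b' where "b' = 2 *\<^sub>R 1 - t"
  have sb': "star b' = b'" unfolding b'_def using st by (simp add: star_diff star_scaleR star_one)
  have "1 - ff t = (1/16) *\<^sub>R (star b' * (t + 4 *\<^sub>R 1) * b')"
    by (subst sb', unfold b'_def) (use ff_le1[of t] in simp)
  thus "pos (1 - ff t)" using pos_conj[OF p2, of b'] by (simp add: pos_scaleR)
qed

lemma unit_contr:
  assumes "star p = p" "p * p = p"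
  shows "sa_contraction (rep (2 *\<^sub>R p - 1))"
proof (rule sa_contr)
  show "star (2 *\<^sub>R p - 1) = 2 *\<^sub>R p - 1" using assms by (simp add: star_diff star_scaleR star_one)
  have "2 *\<^sub>R p - 1 + 1 = 2 *\<^sub>R p" by simp
  thus "pos (2 *\<^sub>R p - 1 + 1)" using pos_scaleR[OF pos_proj[OF assms]] by simp
  have "1 - (2 *\<^sub>R p - 1) = 2 *\<^sub>R (1 - p)" by (simp add: algebra_simps scaleR_2)
  thus "pos (1 - (2 *\<^sub>R p - 1))" using pos_scaleR[OF pos_coproj[OF assms]] by simp
qed



theorem theorem2:
  fixes N1 N2 :: "('h::chilbert_space \<Rightarrow> 'h) set"
    and \<omega> :: "('h \<Rightarrow> 'h) \<Rightarrow> complex"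
  assumes "von_neumann_algebra N1"
    and "von_neumann_algebra N2"
    and "N1 \<subseteq> commutant N2"
    and "normal_state (vN_join N1 N2) \<omega>"
    and "EPR_incommensurable N1 N2 \<omega>"
  shows "Bell_correlated N1 N2 \<omega>"
proof -
  define M where "M = vN_join N1 N2"
  note vN1 = vN_closed[OF assms(1)] and vN2 = vN_closed[OF assms(2)]
  have Meq: "M = commutant (commutant (N1 \<union> N2))" unfolding M_def vN_join_def ..
  interpret Mb: bset "commutant (N1 \<union> N2)" by (rule bset_commutant)
  have Madd: "rep a \<in> M \<Longrightarrow> rep b \<in> M \<Longrightarrow> rep (a + b) \<in> M" for a b unfolding Meq by (rule Mb.C_add)
  have Mmult: "rep a \<in> M \<Longrightarrow> rep b \<in> M \<Longrightarrow> rep (a * b) \<in> M" for a b unfolding Meq by (rule Mb.C_mult)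
  have Mdiff: "rep a \<in> M \<Longrightarrow> rep b \<in> M \<Longrightarrow> rep (a - b) \<in> M" for a b unfolding Meq by (rule Mb.C_diff)
  have MscaleR: "rep a \<in> M \<Longrightarrow> rep (r *\<^sub>R a) \<in> M" for a r unfolding Meq by (rule Mb.C_scaleR)
  have Msc: "rep a \<in> M \<Longrightarrow> rep (sc c a) \<in> M" for a c unfolding Meq by (rule Mb.C_sc)
  have Mone: "rep 1 \<in> M" unfolding Meq by (rule Mb.C_one)
  have N1M: "A \<in> M" if "A \<in> N1" for A
  proof -
    have "bounded_op A" using that assms(1) unfolding von_neumann_algebra_def by auto
    thus ?thesis unfolding Meq commutant_def using that by auto
  qed
  have N2M: "A \<in> M" if "A \<in> N2" for A
  proof -
    have "bounded_op A" using that assms(2) unfolding von_neumann_algebra_def by auto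
    thus ?thesis unfolding Meq commutant_def using that by auto
  qed
  have comm12: "a * b = b * a" if "rep a \<in> N1" "rep b \<in> N2" for a b
  proof -
    have "rep a \<in> commutant N2" using that assms(3) by auto
    hence "rep b \<circ> rep a = rep a \<circ> rep b" using that(2) unfolding commutant_def by auto
    thus ?thesis by (metis rep_inject times_bop.rep_eq)
  qed
  have st: "is_state M \<omega>" using assms(4) unfolding M_def normal_state_def by simp
  define om where "om a = \<omega> (rep a)" for a :: "'h bop"
  have om_add: "om (a + b) = om a + om b" if "rep a \<in> M" "rep b \<in> M" for a b
    using st that unfolding is_state_def om_def by (simp add: plus_bop.rep_eq)
  have om_sc: "om (sc c a) = c * om a" if "rep a \<in> M" for a c
    using st that unfolding is_state_def om_def by (simp add: sc.rep_eq)
  have om_scaleR: "om (r *\<^sub>R a) = complex_of_real r * om a" if "rep a \<in> M" for a r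
    using st that unfolding is_state_def om_def by (simp add: scaleR_bop.rep_eq)
  have om_uminus: "om (- a) = - om a" if "rep a \<in> M" for a
  proof -
    have "om (sc (-1) a) = (-1) * om a" by (rule om_sc[OF that])
    thus ?thesis by (subst uminus_sc) simp
  qed
  have Muminus: "rep (- a) \<in> M" if "rep a \<in> M" for a
  proof -
    have "rep (sc (-1) a) \<in> M" by (rule Msc[OF that])
    thus ?thesis by (subst uminus_sc)
  qed
  have om_diff: "om (a - b) = om a - om b" if "rep a \<in> M" "rep b \<in> M" for a b
  proof -
    have "om (a - b) = om (a + - b)" by (simp only: diff_conv_add_uminus)
    also have "\<dots> = om a + om (- b)" by (rule om_add[OF that(1) Muminus[OF that(2)]])
    also have "\<dots> = om a - om b" using om_uminus[OF that(2)] by simp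
    finally show ?thesis .
  qed
  have om_one: "om 1 = 1" using st unfolding is_state_def om_def by (simp add: one_bop.rep_eq)
  have om_pos: "Im (om (star a * a)) = 0 \<and> 0 \<le> Re (om (star a * a))" if "rep a \<in> M" for a
    using st that unfolding is_state_def om_def by (simp add: times_bop.rep_eq star.rep_eq)
  define Ms where "Ms = {z. rep z \<in> M \<and> rep (star z) \<in> M}"
  have Ms_add: "a \<in> Ms \<Longrightarrow> b \<in> Ms \<Longrightarrow> a + b \<in> Ms" for a b
    unfolding Ms_def by (simp add: Madd star_add)
  have Ms_diff: "a \<in> Ms \<Longrightarrow> b \<in> Ms \<Longrightarrow> a - b \<in> Ms" for a b
    unfolding Ms_def by (simp add: Mdiff star_diff)
  have Ms_mult: "a \<in> Ms \<Longrightarrow> b \<in> Ms \<Longrightarrow> a * b \<in> Ms" for a b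
    unfolding Ms_def by (simp add: Mmult star_mult)
  have Ms_scaleR: "a \<in> Ms \<Longrightarrow> r *\<^sub>R a \<in> Ms" for a r
    unfolding Ms_def by (simp add: MscaleR star_scaleR)
  have Ms_one: "1 \<in> Ms" unfolding Ms_def by (simp add: Mone star_one)
  have Ms_star: "a \<in> Ms \<Longrightarrow> star a \<in> Ms" for a unfolding Ms_def by (simp add: star_star)
  have MsM: "a \<in> Ms \<Longrightarrow> rep a \<in> M" for a unfolding Ms_def by simp
  have Ms_ff: "t \<in> Ms \<Longrightarrow> ff t \<in> Ms" for t unfolding ff_def by (intro Ms_diff Ms_scaleR Ms_mult)
  have kill: "om (x * z) = 0" if xM: "x \<in> Ms" and sx: "star x = x" and xx: "om (x * x) = 0" and zM: "z \<in> Ms" for x z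
  proof -
    have xM': "rep x \<in> M" and zM': "rep z \<in> M" and szM: "rep (star z) \<in> M" using xM zM unfolding Ms_def by auto
    define \<alpha> where "\<alpha> = om (x * z)"
    define \<beta> where "\<beta> = om (star z * x)"
    define \<gamma> where "\<gamma> = om (star z * z)"
    have "Im (cnj t * \<alpha> + t * \<beta> + \<gamma>) = 0 \<and> 0 \<le> Re (cnj t * \<alpha> + t * \<beta> + \<gamma>)" for t
    proof -
      define y where "y = sc t x + z"
      have yM: "rep y \<in> M" unfolding y_def by (intro Madd Msc xM' zM')
      have "star y * y = (sc (cnj t) x + star z) * (sc t x + z)"
        unfolding y_def by (simp add: star_add star_sc sx)
      also have "\<dots> = sc (cnj t) x * sc t x + sc (cnj t) x * z + (star z * sc t x + star z * z)"
        by (simp add: algebra_simps)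
      also have "\<dots> = sc (cnj t * t) (x * x) + sc (cnj t) (x * z) + (sc t (star z * x) + star z * z)"
        by (simp add: sc_mult_left sc_mult_right sc_sc mult.commute)
      finally have eq: "star y * y = sc (cnj t * t) (x * x) + sc (cnj t) (x * z) + (sc t (star z * x) + star z * z)" .
      have m1: "rep (x * x) \<in> M" using xM' by (intro Mmult)
      have m2: "rep (x * z) \<in> M" using xM' zM' by (intro Mmult)
      have m3: "rep (star z * x) \<in> M" using xM' szM by (intro Mmult)
      have m4: "rep (star z * z) \<in> M" using zM' szM by (intro Mmult)
      have "om (star y * y) = cnj t * t * om (x * x) + cnj t * om (x * z) + (t * om (star z * x) + om (star z * z))"
        unfolding eq using m1 m2 m3 m4
        by (simp add: om_add om_sc Madd Msc)
      also have "\<dots> = cnj t * \<alpha> + t * \<beta> + \<gamma>" unfolding \<alpha>_def \<beta>_def \<gamma>_def xx by (simp add: add.assoc)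
      finally show ?thesis using om_pos[OF yM] by simp
    qed
    thus ?thesis unfolding \<alpha>_def[symmetric] by (rule complex_kill)
  qed
  obtain E1 F1 E2 F2 where E1: "E1 \<in> N1" and F1: "F1 \<in> N1" and E2: "E2 \<in> N2" and F2: "F2 \<in> N2"
    and pE1: "projection E1" and pF1: "projection F1" and pE2: "projection E2" and pF2: "projection F2"
    and epr1: "EPR_state_for \<omega> E1 E2" and epr2: "EPR_state_for \<omega> F1 F2"
    and nc: "\<omega> (abs_sq (commutator E1 F1)) \<noteq> 0"
    using assms(5) unfolding EPR_incommensurable_def by blast
  define p where "p = abs E1"
  define q where "q = abs F1"
  define p' where "p' = abs E2"
  define q' where "q' = abs F2"
  note fp = proj_facts[OF pE1, folded p_def] and fq = proj_facts[OF pF1, folded q_def]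
    and fp' = proj_facts[OF pE2, folded p'_def] and fq' = proj_facts[OF pF2, folded q'_def]
  have pN: "rep p \<in> N1" "rep q \<in> N1" "rep p' \<in> N2" "rep q' \<in> N2"
    using fp(1) fq(1) fp'(1) fq'(1) E1 F1 E2 F2 by auto
  have pMs: "p \<in> Ms" "q \<in> Ms" "p' \<in> Ms" "q' \<in> Ms"
    unfolding Ms_def using pN fp(2) fq(2) fp'(2) fq'(2) N1M N2M by auto
  define u where "u = 2 *\<^sub>R p - 1"
  define v where "v = 2 *\<^sub>R q - 1"
  define u' where "u' = 2 *\<^sub>R p' - 1"
  define v' where "v' = 2 *\<^sub>R q' - 1"
  define s where "s = u + v"
  define d where "d = u - v"
  define s' where "s' = u' + v'"
  define d' where "d' = u' - v'"
  have uN: "rep u \<in> N1" "rep v \<in> N1" unfolding u_def v_def using pN by (auto intro: vN1)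
  have uN': "rep u' \<in> N2" "rep v' \<in> N2" unfolding u'_def v'_def using pN by (auto intro: vN2)
  have s'N: "rep s' \<in> N2" "rep d' \<in> N2" unfolding s'_def d'_def using uN' by (auto intro: vN2)
  have sN: "rep s \<in> N1" "rep d \<in> N1" unfolding s_def d_def using uN by (auto intro: vN1)
  have ffN: "rep (ff s') \<in> N2" "rep (ff d') \<in> N2" unfolding ff_def using s'N by (auto intro: vN2)
  have uMs: "u \<in> Ms" "v \<in> Ms" "u' \<in> Ms" "v' \<in> Ms" unfolding u_def v_def u'_def v'_def
    using pMs by (auto intro: Ms_diff Ms_scaleR Ms_one)
  have sMs: "s \<in> Ms" "d \<in> Ms" "s' \<in> Ms" "d' \<in> Ms" unfolding s_def d_def s'_def d'_def
    using uMs by (auto intro: Ms_add Ms_diff)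
  have star_u: "star u = u" "star v = v" "star u' = u'" "star v' = v'"
    unfolding u_def v_def u'_def v'_def using fp fq fp' fq' by (simp_all add: star_diff star_scaleR star_one)
  have star_s: "star s' = s'" "star d' = d'" unfolding s'_def d'_def using star_u
    by (simp_all add: star_add star_diff)
  have cu: "sa_contraction (rep u)" "sa_contraction (rep v)"
    unfolding u_def v_def using unit_contr fp fq by auto
  have pos_p': "pos p'" "pos q'" "pos (1 - p')" "pos (1 - q')"
    using pos_proj pos_coproj fp' fq' by auto
  have cs': "sa_contraction (rep (ff s'))"
  proof (rule ff_contr[OF star_s(1)])
    have "4 *\<^sub>R 1 - s' = 2 *\<^sub>R (1 - p') + 2 *\<^sub>R (1 - q') + 2 *\<^sub>R 1"
      unfolding s'_def u'_def v'_def four1 by (simp add: algebra_simps scaleR_2)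
    thus "pos (4 *\<^sub>R 1 - s')" using pos_p' pos_one by (metis pos_add pos_scaleR zero_le_numeral)
    have "s' + 4 *\<^sub>R 1 = 2 *\<^sub>R p' + 2 *\<^sub>R q' + 2 *\<^sub>R 1"
      unfolding s'_def u'_def v'_def four1 by (simp add: algebra_simps scaleR_2)
    thus "pos (s' + 4 *\<^sub>R 1)" using pos_p' pos_one by (metis pos_add pos_scaleR zero_le_numeral)
  qed
  have cd': "sa_contraction (rep (ff d'))"
  proof (rule ff_contr[OF star_s(2)])
    have "4 *\<^sub>R 1 - d' = 2 *\<^sub>R (1 - p') + 2 *\<^sub>R q' + 2 *\<^sub>R 1"
      unfolding d'_def u'_def v'_def four1 by (simp add: algebra_simps scaleR_2)
    thus "pos (4 *\<^sub>R 1 - d')" using pos_p' pos_one by (metis pos_add pos_scaleR zero_le_numeral)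
    have "d' + 4 *\<^sub>R 1 = 2 *\<^sub>R p' + 2 *\<^sub>R (1 - q') + 2 *\<^sub>R 1"
      unfolding d'_def u'_def v'_def four1 by (simp add: algebra_simps scaleR_2)
    thus "pos (d' + 4 *\<^sub>R 1)" using pos_p' pos_one by (metis pos_add pos_scaleR zero_le_numeral)
  qed
  have xp: "p - p' \<in> Ms" "q - q' \<in> Ms" using pMs by (auto intro: Ms_diff)
  have sxp: "star (p - p') = p - p'" "star (q - q') = q - q'"
    using fp fq fp' fq' by (simp_all add: star_diff)
  have xxp: "om ((p - p') * (p - p')) = 0"
    using epr1 unfolding EPR_state_for_def om_def by (simp add: minus_bop.rep_eq times_bop.rep_eq fp(1) fp'(1))
  have xxq: "om ((q - q') * (q - q')) = 0"
    using epr2 unfolding EPR_state_for_def om_def by (simp add: minus_bop.rep_eq times_bop.rep_eq fq(1) fq'(1))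
  have killp: "om ((p - p') * z) = 0" if "z \<in> Ms" for z by (rule kill[OF xp(1) sxp(1) xxp that])
  have killq: "om ((q - q') * z) = 0" if "z \<in> Ms" for z by (rule kill[OF xp(2) sxp(2) xxq that])
  have Ts: "om (s' * z) = om (s * z)" if zM: "z \<in> Ms" for z
  proof -
    have eq: "s' * z = s * z - 2 *\<^sub>R ((p - p') * z) - 2 *\<^sub>R ((q - q') * z)"
      unfolding s_def s'_def u_def v_def u'_def v'_def by (simp add: algebra_simps)
    have m: "rep (s * z) \<in> M" "rep ((p - p') * z) \<in> M" "rep ((q - q') * z) \<in> M"
      using MsM Ms_mult sMs xp zM by auto
    show ?thesis unfolding eq using m killp[OF zM] killq[OF zM]
      by (simp add: om_diff om_scaleR Mdiff MscaleR)
  qed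
  have Td: "om (d' * z) = om (d * z)" if zM: "z \<in> Ms" for z
  proof -
    have eq: "d' * z = d * z - 2 *\<^sub>R ((p - p') * z) + 2 *\<^sub>R ((q - q') * z)"
      unfolding d_def d'_def u_def v_def u'_def v'_def by (simp add: algebra_simps)
    have m: "rep (d * z) \<in> M" "rep ((p - p') * z) \<in> M" "rep ((q - q') * z) \<in> M"
      using MsM Ms_mult sMs xp zM by auto
    show ?thesis unfolding eq using m killp[OF zM] killq[OF zM]
      by (simp add: om_diff om_add om_scaleR Mdiff MscaleR)
  qed
  have ffT: "om (ff t' * y) = om (ff t * y)"
    if T: "\<And>z. z \<in> Ms \<Longrightarrow> om (t' * z) = om (t * z)" and tt: "t * t' = t' * t"
      and tM: "t \<in> Ms" and t'M: "t' \<in> Ms" and yM: "y \<in> Ms" for t t' y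
  proof -
    have ms: "a \<in> Ms \<Longrightarrow> b \<in> Ms \<Longrightarrow> a * b \<in> Ms" for a b by (rule Ms_mult)
    have c1: "t * (t' * (t' * y)) = t' * (t' * (t * y))" using tt by (metis mult.assoc)
    have c2: "t * (t' * (t * y)) = t' * (t * (t * y))" using tt by (metis mult.assoc)
    have "om (t' * (t' * (t' * y))) = om (t * (t' * (t' * y)))" using T ms t'M yM by blast
    also have "\<dots> = om (t' * (t' * (t * y)))" unfolding c1 ..
    also have "\<dots> = om (t * (t' * (t * y)))" using T ms t'M tM yM by blast
    also have "\<dots> = om (t' * (t * (t * y)))" unfolding c2 ..
    also have "\<dots> = om (t * (t * (t * y)))" using T ms tM yM by blast
    finally have cube: "om (t' * (t' * (t' * y))) = om (t * (t * (t * y)))" .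
    have lin: "om (ff r * y) = complex_of_real (3/4) * om (r * y) - complex_of_real (1/16) * om (r * (r * (r * y)))"
      if "r \<in> Ms" for r
    proof -
      have "ff r * y = (3/4) *\<^sub>R (r * y) - (1/16) *\<^sub>R (r * (r * (r * y)))"
        unfolding ff_def by (simp add: algebra_simps)
      moreover have "rep (r * y) \<in> M" "rep (r * (r * (r * y))) \<in> M" using that yM MsM ms by auto
      ultimately show ?thesis by (simp add: om_diff om_scaleR MscaleR)
    qed
    show ?thesis using lin[OF t'M] lin[OF tM] cube T[OF yM] by simp
  qed
  have comm_ss: "s * s' = s' * s" "d * d' = d' * d" using comm12 sN s'N by auto
  define A2 where "A2 = ff s'"
  define B2 where "B2 = ff d'"
  define EE where "EE = u * A2 + u * B2 + v * A2 - v * B2"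
  have EE2: "EE = A2 * s + B2 * d"
  proof -
    have "u * A2 = A2 * u" "u * B2 = B2 * u" "v * A2 = A2 * v" "v * B2 = B2 * v"
      using comm12 uN ffN unfolding A2_def B2_def by auto
    thus ?thesis unfolding EE_def s_def d_def by (simp add: algebra_simps)
  qed
  have omEE: "om EE = om (ff s * s) + om (ff d * d)"
  proof -
    have "om EE = om (A2 * s) + om (B2 * d)"
      unfolding EE2 A2_def B2_def using MsM Ms_mult Ms_ff sMs by (simp add: om_add)
    also have "om (A2 * s) = om (ff s * s)" unfolding A2_def by (rule ffT[OF Ts comm_ss(1) sMs(1) sMs(3) sMs(1)])
    also have "om (B2 * d) = om (ff d * d)" unfolding B2_def by (rule ffT[OF Td comm_ss(2) sMs(2) sMs(4) sMs(2)])
    finally show ?thesis .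
  qed
  define c where "c = p * q - q * p"
  have uu: "u * u = 1" "v * v = 1" unfolding u_def v_def using proj_unit fp(3) fq(3) by auto
  have W: "(v * u - u * v) * (u * v - v * u) = 16 *\<^sub>R (star c * c)"
  proof -
    have "v * u - u * v = 4 *\<^sub>R (q * p - p * q)" unfolding u_def v_def by (rule comm_identity)
    moreover have "u * v - v * u = 4 *\<^sub>R (p * q - q * p)" unfolding u_def v_def by (rule comm_identity)
    moreover have "star c = q * p - p * q" unfolding c_def using fp fq by (simp add: star_diff star_mult)
    ultimately show ?thesis unfolding c_def by simp
  qed
  have sum: "ff s * s + ff d * d = 2 *\<^sub>R 1 + 2 *\<^sub>R (star c * c)"
    unfolding s_def d_def chsh_identity[OF uu] W by simp
  have cM: "rep c \<in> M" unfolding c_def using MsM Ms_mult Ms_diff pMs by auto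
  have scM: "rep (star c * c) \<in> M" using cM MsM Ms_mult Ms_diff pMs Ms_star unfolding c_def
    by (metis Ms_def mem_Collect_eq)
  have omsum: "om EE = 2 + 2 * om (star c * c)"
  proof -
    have "om EE = om (ff s * s + ff d * d)"
      unfolding omEE using MsM Ms_mult Ms_ff sMs by (simp add: om_add)
    also have "\<dots> = 2 + 2 * om (star c * c)" unfolding sum using scM Mone
      by (simp add: om_add om_scaleR MscaleR om_one)
    finally show ?thesis .
  qed
  have wdef: "om (star c * c) = \<omega> (abs_sq (commutator E1 F1))"
    unfolding om_def c_def abs_sq_def commutator_def
    by (simp add: times_bop.rep_eq star.rep_eq minus_bop.rep_eq fp(1) fq(1))
  define w where "w = om (star c * c)"
  have wpos: "Im w = 0" "Re w \<ge> 0" using om_pos[OF cM] unfolding w_def by auto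
  have wne: "w \<noteq> 0" using nc wdef unfolding w_def by simp
  have wre: "Re w > 0" using wpos wne by (metis complex_eq_iff less_eq_real_def zero_complex.simps)
  have val: "cmod (om EE) / 2 > 1"
  proof -
    have "om EE = complex_of_real (2 + 2 * Re w)" unfolding omsum w_def[symmetric]
      using wpos by (simp add: complex_eq_iff)
    hence "cmod (om EE) = \<bar>2 + 2 * Re w\<bar>" by (simp only: norm_of_real)
    hence "cmod (om EE) = 2 + 2 * Re w" using wre by simp
    thus ?thesis using wre by simp
  qed
  have repEE: "rep EE = op_minus (op_plus (op_plus (rep u \<circ> rep A2) (rep u \<circ> rep B2)) (rep v \<circ> rep A2)) (rep v \<circ> rep B2)"
    unfolding EE_def by (simp add: plus_bop.rep_eq minus_bop.rep_eq times_bop.rep_eq)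
  show ?thesis unfolding Bell_correlated_def
  proof (intro bexI conjI)
    show "1 < cmod (\<omega> (op_minus (op_plus (op_plus (rep u \<circ> rep A2) (rep u \<circ> rep B2)) (rep v \<circ> rep A2)) (rep v \<circ> rep B2))) / 2"
      using val unfolding om_def repEE .
  qed (use cu cs' cd' uN ffN in \<open>auto simp: A2_def B2_def\<close>)
qed


end
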